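(* For all integers $n-2\ge k\ge0$, $$(n)_2\,\Lambda_{n-2,k}(\alpha)=\Lambda_{n,k+2}(\alpha)-(4k+6)\,\Lambda_{n,k+1}(\alpha).$$
   Context: Let $(\alpha_n)_{n\ge0}$ be an arbitrary sequence of complex numbers. For $n\ge k\ge0$ define $\Lambda_{n,k}(\alpha)=\sum_{\nu=0}^{k}\binom{n}{\nu}(2k-\nu)_k\,\alpha_{n-\nu}$, where $(m)_k=m(m-1)\cdots(m-k+1)$ is the falling factorial; $(n)_2=n(n-1)$. *)

theory Defs
  imports Complex_Main
begin

definition falling :: "nat \<Rightarrow> nat \<Rightarrow> nat" where
  "falling m k = (\<Prod>i<k. (m - i))"

definition Lambda :: "(nat \<Rightarrow> complex) \<Rightarrow> nat \<Rightarrow> nat \<Rightarrow> complex" where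
  "Lambda \<alpha> n k = (\<Sum>\<nu>=0..k. of_nat (n choose \<nu>) * of_nat (falling (2*k - \<nu>) k) * \<alpha> (n - \<nu>))"

end

theory Submission
  imports Defs
begin

lemma falling_Suc2: "falling m (Suc k) = falling m k * (m - k)"
  unfolding falling_def by (simp add: mult.commute)

lemma falling_SucSuc: "falling (Suc m) (Suc k) = Suc m * falling m k"
  unfolding falling_def prod.lessThan_Suc_shift by simp

lemma falling_zero: "m < k \<Longrightarrow> falling m k = 0"
  unfolding falling_def by (rule prod_zero) auto

lemma key:
  assumes "\<nu> \<le> k + 2"
  shows "int (falling (2*k+4-\<nu>) (k+2)) = (4*int k+6) * int (falling (2*k+2-\<nu>) (k+1))
           + int \<nu> * (int \<nu> - 1) * int (falling (2*k+2-\<nu>) k)"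
proof -
  define m where "m = 2*k+2-\<nu>"
  have m: "k \<le> m" "m \<le> 2*k+2" "int \<nu> = 2*int k+2 - int m" using assms unfolding m_def by auto
  have e1: "2*k+4-\<nu> = Suc (Suc m)" using assms unfolding m_def by auto
  have h1: "int (falling (Suc (Suc m)) (k+2)) = (int m+2)*(int m+1)*int (falling m k)"
    by (simp add: falling_SucSuc algebra_simps)
  have h2: "int (falling m (k+1)) = int (falling m k) * (int m - int k)"
    using m(1) by (simp add: falling_Suc2 of_nat_diff)
  show ?thesis unfolding e1 m_def[symmetric] h1 h2 m(3)
    by (simp add: algebra_simps)
qed

lemma keyc:
  assumes "\<nu> \<le> k + 2"
  shows "(of_nat (falling (2*k+4-\<nu>) (k+2)) :: complex) = (4*of_nat k+6) * of_nat (falling (2*k+2-\<nu>) (k+1))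
           + of_nat \<nu> * (of_nat \<nu> - 1) * of_nat (falling (2*k+2-\<nu>) k)"
proof -
  have "(of_int (int (falling (2*k+4-\<nu>) (k+2))) :: complex) = of_int ((4*int k+6) * int (falling (2*k+2-\<nu>) (k+1))
           + int \<nu> * (int \<nu> - 1) * int (falling (2*k+2-\<nu>) k))" using key[OF assms] by simp
  then show ?thesis by simp
qed

lemma choose_shift: "2 \<le> n \<Longrightarrow> (n choose (j+2)) * ((j+2)*(j+1)) = n*(n-1) * ((n-2) choose j)"
proof -
  assume "2 \<le> n"
  then obtain p where p: "n = Suc (Suc p)" by (metis add_2_eq_Suc le_Suc_ex)
  have "(Suc (Suc p) choose Suc (Suc j)) * (Suc (Suc j) * Suc j)
        = Suc (Suc p) * Suc p * (p choose j)"
  proof -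
    have a: "(Suc (Suc p) choose Suc (Suc j)) * Suc (Suc j) = Suc (Suc p) * (Suc p choose Suc j)"
      using Suc_times_binomial[of "Suc j" "Suc p"] by (simp only: mult.commute)
    have b: "(Suc p choose Suc j) * Suc j = Suc p * (p choose j)"
      using Suc_times_binomial[of j p] by (simp only: mult.commute)
    have "(Suc (Suc p) choose Suc (Suc j)) * (Suc (Suc j) * Suc j)
        = ((Suc (Suc p) choose Suc (Suc j)) * Suc (Suc j)) * Suc j" by (simp only: mult.assoc)
    also have "\<dots> = Suc (Suc p) * ((Suc p choose Suc j) * Suc j)" unfolding a by (simp only: mult.assoc)
    also have "\<dots> = Suc (Suc p) * Suc p * (p choose j)" unfolding b by (simp only: mult.assoc)
    finally show ?thesis .
  qed
  then show ?thesis using p by (simp add: algebra_simps)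
qed

lemma lem: "(C::complex)*(c*Y + p*q*W)*a - c*(C*Y*a) = C*p*q*W*a"
  by (simp add: algebra_simps)

theorem mainTheorem15:
  fixes \<alpha> :: "nat \<Rightarrow> complex" and n k :: nat
  assumes "k \<le> n - 2" and "2 \<le> n"
  shows "of_nat (falling n 2) * Lambda \<alpha> (n - 2) k
           = Lambda \<alpha> n (k + 2) - (4 * of_nat k + 6) * Lambda \<alpha> n (k + 1)"
proof -
  define F where "F \<nu> = (of_nat (n choose \<nu>) * of_nat \<nu> * (of_nat \<nu> - 1) * of_nat (falling (2*k+2-\<nu>) k) * \<alpha> (n - \<nu>) :: complex)" for \<nu>
  have A: "Lambda \<alpha> n (k+2) = (\<Sum>\<nu>=0..k+2. of_nat (n choose \<nu>) * of_nat (falling (2*k+4 - \<nu>) (k+2)) * \<alpha> (n - \<nu>))"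
  proof -
    have e: "2*(k+2) = 2*k+4" by simp
    show ?thesis unfolding Lambda_def e by (rule refl)
  qed
  have B: "Lambda \<alpha> n (k+1) = (\<Sum>\<nu>=0..k+2. of_nat (n choose \<nu>) * of_nat (falling (2*k+2 - \<nu>) (k+1)) * \<alpha> (n - \<nu>))"
  proof -
    have kk: "k+2 = Suc (k+1)" by simp
    have "(\<Sum>\<nu>=0..k+2. of_nat (n choose \<nu>) * of_nat (falling (2*k+2 - \<nu>) (k+1)) * \<alpha> (n - \<nu>))
       = (\<Sum>\<nu>=0..Suc (k+1). of_nat (n choose \<nu>) * of_nat (falling (2*k+2 - \<nu>) (k+1)) * \<alpha> (n - \<nu>))"
      by (simp only: kk)
    also have "\<dots> = (\<Sum>\<nu>=0..k+1. of_nat (n choose \<nu>) * of_nat (falling (2*k+2 - \<nu>) (k+1)) * \<alpha> (n - \<nu>))"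
    proof -
      have z: "falling (2*k+2 - Suc (k+1)) (k+1) = 0" by (rule falling_zero) simp
      show ?thesis by (simp only: sum.atLeast0_atMost_Suc z of_nat_0 mult_zero_left mult_zero_right add_0_right)
    qed
    finally have S: "(\<Sum>\<nu>=0..k+2. of_nat (n choose \<nu>) * of_nat (falling (2*k+2 - \<nu>) (k+1)) * \<alpha> (n - \<nu>))
       = (\<Sum>\<nu>=0..k+1. of_nat (n choose \<nu>) * of_nat (falling (2*k+2 - \<nu>) (k+1)) * \<alpha> (n - \<nu>))" .
    have e: "2*(k+1) = 2*k+2" by simp
    show ?thesis unfolding Lambda_def e S by (rule refl)
  qed
  have "Lambda \<alpha> n (k + 2) - (4 * of_nat k + 6) * Lambda \<alpha> n (k + 1) = (\<Sum>\<nu>=0..k+2. F \<nu>)"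
    unfolding A B sum_distrib_left sum_subtractf[symmetric]
  proof (rule sum.cong)
    fix \<nu> :: nat assume "\<nu> \<in> {0..k+2}"
    hence h: "\<nu> \<le> k+2" by simp
    show "of_nat (n choose \<nu>) * of_nat (falling (2*k+4 - \<nu>) (k+2)) * \<alpha> (n - \<nu>) -
          (4 * of_nat k + 6) * (of_nat (n choose \<nu>) * of_nat (falling (2*k+2 - \<nu>) (k+1)) * \<alpha> (n - \<nu>)) = F \<nu>"
      unfolding F_def keyc[OF h] by (rule lem)
  qed simp
  also have "\<dots> = (\<Sum>\<nu>=2..k+2. F \<nu>)"
  proof -
    have "{0..k+2} = {0,1} \<union> {2..k+2}" by auto
    hence "(\<Sum>\<nu>=0..k+2. F \<nu>) = sum F ({0,1} \<union> {2..k+2})" by (simp only:)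
    also have "\<dots> = sum F {0,1} + sum F {2..k+2}" by (rule sum.union_disjoint) auto
    also have "sum F {0,1} = 0" by (simp add: F_def)
    finally show ?thesis by simp
  qed
  also have "\<dots> = (\<Sum>j=0..k. F (j+2))"
    using sum.shift_bounds_cl_nat_ivl[of F 0 2 k] by (simp only: add_0_left)
  also have "\<dots> = of_nat (falling n 2) * Lambda \<alpha> (n - 2) k"
    unfolding Lambda_def sum_distrib_left
  proof (rule sum.cong)
    fix j assume "j \<in> {0..k}"
    have c: "(of_nat (n choose (j+2)) * (of_nat (j+2) * of_nat (j+1)) :: complex)
          = of_nat n * of_nat (n-1) * of_nat ((n-2) choose j)"
      using arg_cong[OF choose_shift[OF assms(2), of j], of "of_nat :: nat \<Rightarrow> complex"]
      by (simp only: of_nat_mult)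
    have f2: "falling n 2 = n * (n-1)" unfolding falling_def by (simp add: numeral_2_eq_2)
    have e: "2*k+2-(j+2) = 2*k-j" "n - (j+2) = n - 2 - j" by auto
    have "F (j+2) = (of_nat (n choose (j+2)) * (of_nat (j+2) * of_nat (j+1))) * of_nat (falling (2*k-j) k) * \<alpha> (n-2-j)"
    proof -
      have o: "(of_nat (j+2) - 1 :: complex) = of_nat (j+1)" by simp
      show ?thesis unfolding F_def e o by (simp only: mult.assoc)
    qed
    also have "\<dots> = of_nat (falling n 2) * (of_nat ((n - 2) choose j) * of_nat (falling (2 * k - j) k) * \<alpha> (n - 2 - j))"
      unfolding c f2 of_nat_mult by (simp only: mult_ac)
    finally show "F (j+2) = of_nat (falling n 2) * (of_nat ((n - 2) choose j) * of_nat (falling (2 * k - j) k) * \<alpha> (n - 2 - j))" .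
  qed simp
  finally show ?thesis by (rule sym)
qed

end
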